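(* For each $\otimes\in\{\mathrm{del},\mathrm{add},\mathrm{edit}\}$, $\textsc{RM}^{\otimes}_{\mathrm{basic}}(aa)\subseteq\mathrm{TC}^0$; i.e. for every sentence $\phi=\forall x\forall y\,\psi$ with $\psi$ quantifier-free over $\{E\}$, $\textsc{RM}^{\otimes}_{\mathrm{basic}}(\phi)\in\mathrm{TC}^0$.
   Context: A basic graph is $(V,E)$ with $E\subseteq V\times V$ symmetric and irreflexive. For $S\subseteq V\times V$, $\|S\|=|\{\{u,v\}:(u,v)\in S\}|$. For a first-order sentence $\phi$ over $\{E\}$, $\textsc{RM}^{\mathrm{edit}}_{\mathrm{basic}}(\phi)$: given a basic graph $(V,E)$ and $k\in\mathbb N$, is there $S$ with $\|S\|\le k$ such that $(V,E\triangle S)$ is a basic graph satisfying $\phi$; del (resp. add) versions require $S\subseteq E$ (resp. $S\cap E=\emptyset$). $\mathrm{TC}^0$: problems decided by constant-depth polynomial-size unbounded fan-in circuits with and/or/not and threshold gates. *)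

theory Defs
  imports Main
begin

datatype fo =
    FEq nat nat
  | FE nat nat
  | FNot fo
  | FAnd fo fo
  | FOr fo fo
  | FEx nat fo
  | FAll nat fo

fun free_vars :: "fo \<Rightarrow> nat set" where
  "free_vars (FEq i j) = {i, j}"
| "free_vars (FE i j) = {i, j}"
| "free_vars (FNot p) = free_vars p"
| "free_vars (FAnd p q) = free_vars p \<union> free_vars q"
| "free_vars (FOr p q) = free_vars p \<union> free_vars q"
| "free_vars (FEx x p) = free_vars p - {x}"
| "free_vars (FAll x p) = free_vars p - {x}"

fun qfree :: "fo \<Rightarrow> bool" where
  "qfree (FEq i j) = True"
| "qfree (FE i j) = True"
| "qfree (FNot p) = qfree p"
| "qfree (FAnd p q) = (qfree p \<and> qfree q)"
| "qfree (FOr p q) = (qfree p \<and> qfree q)"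
| "qfree (FEx x p) = False"
| "qfree (FAll x p) = False"

fun holds :: "nat \<Rightarrow> (nat \<times> nat) set \<Rightarrow> (nat \<Rightarrow> nat) \<Rightarrow> fo \<Rightarrow> bool" where
  "holds n E s (FEq i j) = (s i = s j)"
| "holds n E s (FE i j) = ((s i, s j) \<in> E)"
| "holds n E s (FNot p) = (\<not> holds n E s p)"
| "holds n E s (FAnd p q) = (holds n E s p \<and> holds n E s q)"
| "holds n E s (FOr p q) = (holds n E s p \<or> holds n E s q)"
| "holds n E s (FEx x p) = (\<exists>a<n. holds n E (s(x := a)) p)"
| "holds n E s (FAll x p) = (\<forall>a<n. holds n E (s(x := a)) p)"

definition sentence :: "fo \<Rightarrow> bool" where
  "sentence \<phi> \<longleftrightarrow> free_vars \<phi> = {}"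

text \<open>Satisfaction of a sentence (assignment irrelevant; we fix one).\<close>
definition models :: "nat \<Rightarrow> (nat \<times> nat) set \<Rightarrow> fo \<Rightarrow> bool" where
  "models n E \<phi> \<longleftrightarrow> holds n E (\<lambda>_. 0) \<phi>"

definition basic_graph :: "nat \<Rightarrow> (nat \<times> nat) set \<Rightarrow> bool" where
  "basic_graph n E \<longleftrightarrow> E \<subseteq> {0..<n} \<times> {0..<n} \<and> sym E \<and> irrefl E"

definition upair_count :: "(nat \<times> nat) set \<Rightarrow> nat" where
  "upair_count S = card ((\<lambda>(u, v). {u, v}) ` S)"

definition symdiff :: "'a set \<Rightarrow> 'a set \<Rightarrow> 'a set" where
  "symdiff A B = (A - B) \<union> (B - A)"

datatype mode = Del | Add | Edit

definition RM_yes :: "mode \<Rightarrow> fo \<Rightarrow> nat \<Rightarrow> (nat \<times> nat) set \<Rightarrow> nat \<Rightarrow> bool" where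
  "RM_yes md \<phi> n E k \<longleftrightarrow>
     (\<exists>S. S \<subseteq> {0..<n} \<times> {0..<n} \<and> upair_count S \<le> k
        \<and> (md = Del \<longrightarrow> S \<subseteq> E) \<and> (md = Add \<longrightarrow> S \<inter> E = {})
        \<and> basic_graph n (symdiff E S) \<and> models n (symdiff E S) \<phi>)"

text \<open>Circuits are represented as trees (formulas); for constant depth this
  changes the size only polynomially. \<open>CThr t cs\<close> outputs 1 iff at least t of
  its inputs are 1.\<close>

datatype circuit =
    CIn nat
  | CConst bool
  | CNot circuit
  | CAnd "circuit list"
  | COr "circuit list"
  | CThr nat "circuit list"

fun ceval :: "(nat \<Rightarrow> bool) \<Rightarrow> circuit \<Rightarrow> bool" where
  "ceval x (CIn i) = x i"
| "ceval x (CConst b) = b"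
| "ceval x (CNot c) = (\<not> ceval x c)"
| "ceval x (CAnd cs) = (\<forall>c\<in>set cs. ceval x c)"
| "ceval x (COr cs) = (\<exists>c\<in>set cs. ceval x c)"
| "ceval x (CThr t cs) = (t \<le> length (filter (ceval x) cs))"

fun csize :: "circuit \<Rightarrow> nat" where
  "csize (CIn i) = 1"
| "csize (CConst b) = 1"
| "csize (CNot c) = Suc (csize c)"
| "csize (CAnd cs) = Suc (sum_list (map csize cs))"
| "csize (COr cs) = Suc (sum_list (map csize cs))"
| "csize (CThr t cs) = Suc (sum_list (map csize cs))"

fun cdepth :: "circuit \<Rightarrow> nat" where
  "cdepth (CIn i) = 0"
| "cdepth (CConst b) = 0"
| "cdepth (CNot c) = Suc (cdepth c)"
| "cdepth (CAnd cs) = Suc (fold max (map cdepth cs) 0)"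
| "cdepth (COr cs) = Suc (fold max (map cdepth cs) 0)"
| "cdepth (CThr t cs) = Suc (fold max (map cdepth cs) 0)"

fun cinputs :: "circuit \<Rightarrow> nat set" where
  "cinputs (CIn i) = {i}"
| "cinputs (CConst b) = {}"
| "cinputs (CNot c) = cinputs c"
| "cinputs (CAnd cs) = (\<Union>c\<in>set cs. cinputs c)"
| "cinputs (COr cs) = (\<Union>c\<in>set cs. cinputs c)"
| "cinputs (CThr t cs) = (\<Union>c\<in>set cs. cinputs c)"

text \<open>An instance (G, k) with G on {0..<n} and k < 2^m is encoded by n*n + m bits:
  the adjacency matrix in row-major order (bit i*n+j is (i,j) \<in> E), followed by the
  m-bit binary representation of k (least significant bit first).\<close>

definition enc :: "nat \<Rightarrow> (nat \<times> nat) set \<Rightarrow> nat \<Rightarrow> nat \<Rightarrow> bool" where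
  "enc n E k i = (if i < n * n then (i div n, i mod n) \<in> E else odd (k div 2 ^ (i - n * n)))"

definition in_TC0 :: "(nat \<Rightarrow> (nat \<times> nat) set \<Rightarrow> nat \<Rightarrow> bool) \<Rightarrow> bool" where
  "in_TC0 P \<longleftrightarrow>
     (\<exists>(C :: nat \<Rightarrow> nat \<Rightarrow> circuit) (d :: nat) (c :: nat) (e :: nat).
        \<forall>n m. cdepth (C n m) \<le> d
            \<and> csize (C n m) \<le> c * (n * n + m + 1) ^ e
            \<and> cinputs (C n m) \<subseteq> {..< n * n + m}
            \<and> (\<forall>E k. basic_graph n E \<and> k < 2 ^ m \<longrightarrow>
                   (ceval (enc n E k) (C n m) \<longleftrightarrow> P n E k)))"

end

theory Submission
  imports Defs
begin

lemma holds_cong: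
  assumes "qfree \<psi>" "free_vars \<psi> \<subseteq> V"
    "\<forall>i\<in>V. \<forall>j\<in>V. (s i = s j \<longleftrightarrow> s' i = s' j) \<and> ((s i, s j) \<in> E \<longleftrightarrow> (s' i, s' j) \<in> E')"
  shows "holds n E s \<psi> \<longleftrightarrow> holds n' E' s' \<psi>"
  using assms by (induction \<psi>) auto

definition fT :: "fo \<Rightarrow> nat \<Rightarrow> nat \<Rightarrow> bool" where
  "fT \<psi> x y = holds 2 {(0,1),(1,0)} ((\<lambda>_. 0)(x:=0, y:=1)) \<psi>"
definition fF :: "fo \<Rightarrow> nat \<Rightarrow> nat \<Rightarrow> bool" where
  "fF \<psi> x y = holds 2 {} ((\<lambda>_. 0)(x:=0, y:=1)) \<psi>"
definition cc :: "fo \<Rightarrow> bool" where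
  "cc \<psi> = holds 1 {} (\<lambda>_. 0) \<psi>"

lemma cond_xy: "(\<forall>i\<in>{x,y}. \<forall>j\<in>{x,y}. P i j) \<longleftrightarrow> P x x \<and> P x y \<and> P y x \<and> P y y"
  by blast

lemma models_char:
  assumes "qfree \<psi>" "free_vars \<psi> \<subseteq> {x,y}" "basic_graph n G"
  shows "models n G (FAll x (FAll y \<psi>)) \<longleftrightarrow>
    (\<forall>a<n. \<forall>b<n. if a = b then cc \<psi> else (if (a,b)\<in>G then fT \<psi> x y else fF \<psi> x y))"
proof -
  have sy: "(a,b)\<in>G \<Longrightarrow> (b,a)\<in>G" for a b using assms(3) unfolding basic_graph_def sym_def by blast
  have ir: "(a,a)\<notin>G" for a using assms(3) unfolding basic_graph_def irrefl_def by blast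
  have "holds n G ((\<lambda>_. 0)(x:=a, y:=b)) \<psi> \<longleftrightarrow>
     (if a = b then cc \<psi> else (if (a,b)\<in>G then fT \<psi> x y else fF \<psi> x y))" for a b
  proof (cases "a = b")
    case True
    have "holds n G ((\<lambda>_. 0)(x:=a, y:=b)) \<psi> \<longleftrightarrow> holds 1 {} (\<lambda>_. 0) \<psi>"
      using ir True by (intro holds_cong[OF assms(1,2)], unfold cond_xy, cases "x = y") simp_all
    then show ?thesis unfolding cc_def using True by simp
  next
    case False
    show ?thesis
    proof (cases "(a,b)\<in>G")
      case True
      have "holds n G ((\<lambda>_. 0)(x:=a, y:=b)) \<psi> \<longleftrightarrow> fT \<psi> x y"
        unfolding fT_def using sy[OF True] False ir True
        by (intro holds_cong[OF assms(1,2)], unfold cond_xy, cases "x = y") simp_all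
      with False True show ?thesis by simp
    next
      case F: False
      have F2: "(b,a)\<notin>G" using sy F by blast
      have "holds n G ((\<lambda>_. 0)(x:=a, y:=b)) \<psi> \<longleftrightarrow> fF \<psi> x y"
        unfolding fF_def using F2 False ir F
        by (intro holds_cong[OF assms(1,2)], unfold cond_xy, cases "x = y") simp_all
      with False F show ?thesis by simp
    qed
  qed
  then show ?thesis unfolding models_def by simp
qed


definition cellS :: "nat \<Rightarrow> (nat \<times> nat) set" where
  "cellS n = {(i,j). i < j \<and> j < n}"
definition Kn :: "nat \<Rightarrow> (nat \<times> nat) set" where
  "Kn n = {(a,b). a < n \<and> b < n \<and> a \<noteq> b}"
definition edgU :: "nat \<Rightarrow> (nat \<times> nat) set \<Rightarrow> nat" where
  "edgU n E = card {p \<in> cellS n. p \<in> E}"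
definition missU :: "nat \<Rightarrow> (nat \<times> nat) set \<Rightarrow> nat" where
  "missU n E = card {p \<in> cellS n. p \<notin> E}"

lemma upair_lt:
  assumes "sym A" "irrefl A" "finite A"
  shows "upair_count A = card {(u,v)\<in>A. u < v}"
proof -
  let ?f = "\<lambda>(u::nat, v). {u, v}"
  have "?f ` A = ?f ` {(u,v)\<in>A. u < v}"
  proof
    show "?f ` A \<subseteq> ?f ` {(u,v)\<in>A. u < v}"
    proof
      fix z assume "z \<in> ?f ` A"
      then obtain u v where uv: "(u,v)\<in>A" "z = {u,v}" by auto
      have "u \<noteq> v" using uv assms(2) unfolding irrefl_def by auto
      moreover have "(v,u)\<in>A" using uv assms(1) unfolding sym_def by auto
      show "z \<in> ?f ` {(u,v)\<in>A. u < v}"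
      proof (cases "u < v")
        case True then show ?thesis using uv by auto
      next
        case False
        then have "v < u" using \<open>u \<noteq> v\<close> by simp
        moreover have "z = ?f (v,u)" using uv by auto
        ultimately show ?thesis using \<open>(v,u)\<in>A\<close> by blast
      qed
    qed
  qed auto
  moreover have "inj_on ?f {(u,v)\<in>A. u < v}"
    unfolding inj_on_def by (auto simp: doubleton_eq_iff)
  ultimately show ?thesis unfolding upair_count_def
    by (simp add: card_image)
qed

lemma basic_fin: "basic_graph n E \<Longrightarrow> finite E"
  unfolding basic_graph_def by (meson finite_SigmaI finite_atLeastLessThan finite_subset)

lemma basic_sub: "basic_graph n E \<Longrightarrow> E \<subseteq> Kn n"
  unfolding basic_graph_def Kn_def irrefl_def by auto

lemma edgU_eq: "basic_graph n E \<Longrightarrow> upair_count E = edgU n E"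
  unfolding edgU_def
  apply (subst upair_lt)
  using basic_fin[of n E] apply (auto simp: basic_graph_def)[3]
  apply (rule arg_cong[where f=card])
  apply (auto simp: cellS_def basic_graph_def)
  done

lemma finite_Kn: "finite (Kn n)"
proof -
  have "Kn n \<subseteq> {..<n} \<times> {..<n}" unfolding Kn_def by auto
  then show ?thesis by (rule finite_subset) auto
qed

lemma missU_eq: "basic_graph n E \<Longrightarrow> upair_count (Kn n - E) = missU n E"
  unfolding missU_def
  apply (subst upair_lt)
    apply (auto simp: basic_graph_def sym_def irrefl_def Kn_def)[2]
  using finite_Kn apply blast
  apply (rule arg_cong[where f=card])
  apply (auto simp: cellS_def Kn_def)
  done

lemma upair_mono: "A \<subseteq> B \<Longrightarrow> finite B \<Longrightarrow> upair_count A \<le> upair_count B"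
  unfolding upair_count_def by (intro card_mono) auto

lemma symdiff_eq: "symdiff E S = G \<Longrightarrow> (p \<in> G \<longleftrightarrow> (p \<in> E \<longleftrightarrow> p \<notin> S))"
  unfolding symdiff_def by auto

lemma Kn_basic: "basic_graph n (Kn n)"
  unfolding basic_graph_def Kn_def sym_def irrefl_def by auto


lemma RM_char:
  assumes q: "qfree \<psi>" and fv: "free_vars \<psi> \<subseteq> {x,y}" and bE: "basic_graph n E"
  shows "RM_yes md (FAll x (FAll y \<psi>)) n E k \<longleftrightarrow>
    (n = 0 \<or> (cc \<psi> \<and> (n = 1 \<or> (fT \<psi> x y \<and> fF \<psi> x y)
       \<or> (fT \<psi> x y \<and> missU n E \<le> k \<and> (md = Del \<longrightarrow> missU n E = 0))
       \<or> (fF \<psi> x y \<and> edgU n E \<le> k \<and> (md = Add \<longrightarrow> edgU n E = 0)))))"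
   (is "?L \<longleftrightarrow> ?R")
proof
  note mc = models_char[OF q fv]
  have EK: "E \<subseteq> Kn n" by (rule basic_sub[OF bE])
  have finE: "finite E" by (rule basic_fin[OF bE])
  have Esub: "E \<subseteq> {0..<n} \<times> {0..<n}" using bE unfolding basic_graph_def by auto
  have symE: "(a,b)\<in>E \<Longrightarrow> (b,a)\<in>E" for a b using bE unfolding basic_graph_def sym_def by auto
  have sdE: "symdiff E {} = E" unfolding symdiff_def by auto
  assume ?R
  have triv: "RM_yes md (FAll x (FAll y \<psi>)) n E k" if "\<forall>a<n. \<forall>b<n.
       (if a = b then cc \<psi> else (if (a,b)\<in>E then fT \<psi> x y else fF \<psi> x y))"
    unfolding RM_yes_def
    by (rule exI[where x="{}"]) (simp add: sdE bE mc[OF bE] that upair_count_def)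
  show ?L
  proof (cases "n = 0")
    case True then show ?thesis by (intro triv) auto
  next
    case n0: False
    with \<open>?R\<close> have c: "cc \<psi>" by auto
    consider "n = 1" | "fT \<psi> x y \<and> fF \<psi> x y"
       | "fT \<psi> x y \<and> missU n E \<le> k \<and> (md = Del \<longrightarrow> missU n E = 0)"
       | "fF \<psi> x y \<and> edgU n E \<le> k \<and> (md = Add \<longrightarrow> edgU n E = 0)"
      using \<open>?R\<close> n0 by blast
    then show ?thesis
    proof cases
      case 1 then show ?thesis by (intro triv) (auto simp: c)
    next
      case 2 then show ?thesis by (intro triv) (auto simp: c)
    next
      case 3
      have sd: "symdiff E (Kn n - E) = Kn n" using EK unfolding symdiff_def by auto
      have del: "Kn n - E = {}" if "missU n E = 0"
      proof (rule ccontr)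
        assume "Kn n - E \<noteq> {}"
        then obtain a b where ab: "(a,b) \<in> Kn n - E" by auto
        have fin: "finite {p \<in> cellS n. p \<notin> E}"
          using finite_Kn[of n] by (rule finite_subset[rotated]) (auto simp: cellS_def Kn_def)
        have "(a,b) \<in> {p \<in> cellS n. p \<notin> E} \<or> (b,a) \<in> {p \<in> cellS n. p \<notin> E}"
          using ab symE unfolding cellS_def Kn_def by (cases "a < b") auto
        then have "{p \<in> cellS n. p \<notin> E} \<noteq> {}" by auto
        with fin that show False unfolding missU_def by simp
      qed
      show ?thesis unfolding RM_yes_def
        apply (rule exI[where x="Kn n - E"])
        using 3 c del sd Kn_basic[of n] missU_eq[OF bE] mc[OF Kn_basic] Esub
        by (auto simp: Kn_def)
    next
      case 4
      have sd: "symdiff E E = {}" unfolding symdiff_def by auto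
      have add: "E = {}" if "edgU n E = 0"
      proof (rule ccontr)
        assume "E \<noteq> {}"
        then obtain a b where ab: "(a,b) \<in> E" by auto
        have fin: "finite {p \<in> cellS n. p \<in> E}"
          using finite_Kn[of n] by (rule finite_subset[rotated]) (auto simp: cellS_def Kn_def)
        have "(a,b) \<in> {p \<in> cellS n. p \<in> E} \<or> (b,a) \<in> {p \<in> cellS n. p \<in> E}"
          using ab symE EK unfolding cellS_def Kn_def by (cases "a < b") auto
        then have "{p \<in> cellS n. p \<in> E} \<noteq> {}" by auto
        with fin that show False unfolding edgU_def by simp
      qed
      have b0: "basic_graph n {}" unfolding basic_graph_def sym_def irrefl_def by auto
      show ?thesis unfolding RM_yes_def
        apply (rule exI[where x="E"])
        using 4 c add sd b0 edgU_eq[OF bE] mc[OF b0] Esub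
        by auto
    qed
  qed
next
  note mc = models_char[OF q fv]
  have EK: "E \<subseteq> Kn n" by (rule basic_sub[OF bE])
  assume ?L
  then obtain S where S: "S \<subseteq> {0..<n} \<times> {0..<n}" "upair_count S \<le> k"
     "md = Del \<longrightarrow> S \<subseteq> E" "md = Add \<longrightarrow> S \<inter> E = {}"
     "basic_graph n (symdiff E S)" "models n (symdiff E S) (FAll x (FAll y \<psi>))"
    unfolding RM_yes_def by blast
  define G where "G = symdiff E S"
  have finS: "finite S" using S(1) by (rule finite_subset) auto
  have mem: "p \<in> G \<longleftrightarrow> (p \<in> E \<longleftrightarrow> p \<notin> S)" for p unfolding G_def symdiff_def by blast
  have good: "\<forall>a<n. \<forall>b<n. if a = b then cc \<psi> else (if (a,b)\<in>G then fT \<psi> x y else fF \<psi> x y)"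
    using mc[OF S(5)] S(6) unfolding G_def by blast
  show ?R
  proof (cases "n = 0")
    case True then show ?thesis by simp
  next
    case n0: False
    then have c: "cc \<psi>" using good by auto
    show ?thesis
    proof (cases "n = 1")
      case True then show ?thesis using c by simp
    next
      case False
      with n0 have n2: "0 < n" "1 < n" by auto
      from good n2 have "if (0::nat) = 1 then cc \<psi> else if (0,1)\<in>G then fT \<psi> x y else fF \<psi> x y" by blast
      then have TF: "fT \<psi> x y \<or> fF \<psi> x y" by (auto split: if_splits)
      show ?thesis
      proof (cases "fT \<psi> x y \<and> fF \<psi> x y")
        case True then show ?thesis using c by blast
      next
        case False
        show ?thesis
        proof (cases "fT \<psi> x y")
          case fT: True
          with False have nF: "\<not> fF \<psi> x y" by blast
          have KG: "Kn n \<subseteq> G"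
          proof
            fix p assume "p \<in> Kn n"
            then obtain a b where ab: "p = (a,b)" "a < n" "b < n" "a \<noteq> b" unfolding Kn_def by auto
            from good ab(2,3) have "if a = b then cc \<psi> else if (a,b)\<in>G then fT \<psi> x y else fF \<psi> x y" by blast
            with ab(1,4) nF show "p \<in> G" by (auto split: if_splits)
          qed
          have KS: "Kn n - E \<subseteq> S" using KG mem by blast
          have "missU n E \<le> k"
            using upair_mono[OF KS finS] missU_eq[OF bE] S(2) by simp
          moreover have "md = Del \<longrightarrow> missU n E = 0"
          proof
            assume "md = Del"
            then have e: "Kn n - E = {}" using KS S(3) by blast
            have "missU n E = upair_count {}" using missU_eq[OF bE] e by simp
            then show "missU n E = 0" by (simp add: upair_count_def)
          qed
          ultimately show ?thesis using c fT by blast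
        next
          case nT: False
          with TF have fF: "fF \<psi> x y" by blast
          have KG: "Kn n \<inter> G = {}"
          proof (rule ccontr)
            assume "Kn n \<inter> G \<noteq> {}"
            then obtain a b where ab: "(a,b) \<in> G" "a < n" "b < n" "a \<noteq> b" unfolding Kn_def by auto
            from good ab(2,3) have "if a = b then cc \<psi> else if (a,b)\<in>G then fT \<psi> x y else fF \<psi> x y" by blast
            with ab(1,4) nT show False by (auto split: if_splits)
          qed
          have ES: "E \<subseteq> S" using KG mem EK by blast
          have "edgU n E \<le> k"
            using upair_mono[OF ES finS] edgU_eq[OF bE] S(2) by simp
          moreover have "md = Add \<longrightarrow> edgU n E = 0"
          proof
            assume "md = Add"
            then have "E = {}" using ES S(4) by blast
            then show "edgU n E = 0" using edgU_eq[OF bE] unfolding upair_count_def by simp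
          qed
          ultimately show ?thesis using c fF by blast
        qed
      qed
    qed
  qed
qed


definition cellL :: "nat \<Rightarrow> (nat \<times> nat) list" where
  "cellL n = filter (\<lambda>(i,j). i < j) (List.product [0..<n] [0..<n])"
definition elits :: "nat \<Rightarrow> circuit list" where
  "elits n = map (\<lambda>(i,j). CIn (i*n+j)) (cellL n)"
definition nlits :: "nat \<Rightarrow> circuit list" where
  "nlits n = map (\<lambda>(i,j). CNot (CIn (i*n+j))) (cellL n)"
definition klits :: "nat \<Rightarrow> nat \<Rightarrow> circuit list" where
  "klits n m = concat (map (\<lambda>j. replicate (2^j) (CIn (n*n+j))) (filter (\<lambda>j. 2^j \<le> n*n) [0..<m]))"
definition khigh :: "nat \<Rightarrow> nat \<Rightarrow> circuit" where
  "khigh n m = COr (map (\<lambda>j. CIn (n*n+j)) (filter (\<lambda>j. n*n < 2^j) [0..<m]))"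
definition lek :: "circuit list \<Rightarrow> nat \<Rightarrow> nat \<Rightarrow> circuit" where
  "lek L n m = COr [khigh n m, CThr (length L) (L @ klits n m)]"

lemma cellL_set: "set (cellL n) = cellS n" unfolding cellL_def cellS_def by auto
lemma cellL_dist: "distinct (cellL n)" unfolding cellL_def by (simp add: distinct_product)

lemma enc_cell: "(i,j) \<in> cellS n \<Longrightarrow> enc n E k (i*n+j) = ((i,j) \<in> E)"
proof -
  assume a: "(i,j) \<in> cellS n"
  then have ij: "i < n" "j < n" unfolding cellS_def by auto
  have "i*n+j < n*n"
  proof -
    have "i*n+j < i*n + n" using ij by simp
    also have "\<dots> = (Suc i)*n" by simp
    also have "\<dots> \<le> n*n" using ij by (intro mult_le_mono1) simp
    finally show ?thesis .
  qed
  moreover have "(i*n+j) div n = i" "(i*n+j) mod n = j" using ij by auto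
  ultimately show ?thesis unfolding enc_def by simp
qed

lemma fin_cellS: "finite (cellS n)"
  by (rule finite_subset[of _ "{..<n} \<times> {..<n}"]) (auto simp: cellS_def)

lemma cnt_e: "length (filter (ceval (enc n E k)) (elits n)) = edgU n E"
proof -
  have "length (filter (ceval (enc n E k)) (elits n))
      = length (filter (\<lambda>p. p \<in> E) (cellL n))"
    unfolding elits_def filter_map
    by (simp, rule arg_cong[where f=length], rule filter_cong)
       (auto simp: enc_cell cellL_set)
  also have "\<dots> = edgU n E"
    unfolding edgU_def distinct_length_filter[OF cellL_dist] cellL_set
    by (rule arg_cong[where f=card]) auto
  finally show ?thesis .
qed

lemma cnt_n: "length (filter (ceval (enc n E k)) (nlits n)) = missU n E"
proof -
  have "length (filter (ceval (enc n E k)) (nlits n))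
      = length (filter (\<lambda>p. p \<notin> E) (cellL n))"
    unfolding nlits_def filter_map
    by (simp, rule arg_cong[where f=length], rule filter_cong)
       (auto simp: enc_cell cellL_set)
  also have "\<dots> = missU n E"
    unfolding missU_def distinct_length_filter[OF cellL_dist] cellL_set
    by (rule arg_cong[where f=card]) auto
  finally show ?thesis .
qed

lemma len_cells: "length (elits n) = edgU n E + missU n E" "length (nlits n) = edgU n E + missU n E"
proof -
  have "card (cellS n) = edgU n E + missU n E"
    unfolding edgU_def missU_def
    by (subst card_Un_disjoint[symmetric]) (auto intro: finite_subset[OF _ fin_cellS] arg_cong[where f=card])
  moreover have "length (cellL n) = card (cellS n)"
    using distinct_card[OF cellL_dist] cellL_set by simp
  ultimately show "length (elits n) = edgU n E + missU n E" "length (nlits n) = edgU n E + missU n E"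
    unfolding elits_def nlits_def by auto
qed

lemma missU_le: "missU n E \<le> n * n"
proof -
  have "missU n E \<le> card ({..<n} \<times> {..<n})"
    unfolding missU_def by (rule card_mono) (auto simp: cellS_def)
  then show ?thesis by simp
qed

lemma edgU_le: "edgU n E \<le> n * n"
proof -
  have "edgU n E \<le> card ({..<n} \<times> {..<n})"
    unfolding edgU_def by (rule card_mono) (auto simp: cellS_def)
  then show ?thesis by simp
qed

lemma bits_sum: "(k::nat) < 2^m \<Longrightarrow> k = (\<Sum>j<m. if odd (k div 2^j) then 2^j else 0)"
proof (induction m arbitrary: k)
  case 0 then show ?case using less_one by auto
next
  case (Suc m)
  have h: "k div 2 < 2^m" using Suc.prems by auto
  have "(\<Sum>j<Suc m. if odd (k div 2^j) then (2::nat)^j else 0)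
      = (if odd k then 1 else 0) + (\<Sum>j<m. if odd (k div 2^Suc j) then 2^Suc j else 0)"
    by (simp only: sum.lessThan_Suc_shift) simp
  also have "(\<Sum>j<m. if odd (k div 2^Suc j) then (2::nat)^Suc j else 0)
      = 2 * (\<Sum>j<m. if odd (k div 2 div 2^j) then 2^j else 0)"
    by (auto simp add: sum_distrib_left div_mult2_eq if_distrib intro!: sum.cong)
  also have "(\<Sum>j<m. if odd (k div 2 div 2^j) then 2^j else 0) = k div 2"
    using Suc.IH[OF h] by simp
  finally show ?case by presburger
qed

lemma cnt_k: "length (filter (ceval (enc n E k)) (klits n m))
   = (\<Sum>j\<in>{j. j < m \<and> 2^j \<le> n*n}. if odd (k div 2^j) then 2^j else 0)"
proof -
  have "length (filter (ceval (enc n E k)) (klits n m))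
     = sum_list (map (\<lambda>j. if odd (k div 2^j) then 2^j else 0) (filter (\<lambda>j. 2^j \<le> n*n) [0..<m]))"
    unfolding klits_def
    by (induction m) (auto simp: enc_def)
  also have "\<dots> = (\<Sum>j\<in>{j. j < m \<and> 2^j \<le> n*n}. if odd (k div 2^j) then 2^j else 0)"
    by (subst sum_list_distinct_conv_sum_set) (auto intro: sum.cong)
  finally show ?thesis .
qed

lemma ev_khigh: "ceval (enc n E k) (khigh n m) \<longleftrightarrow> (\<exists>j<m. n*n < 2^j \<and> odd (k div 2^j))"
  unfolding khigh_def by (auto simp: enc_def)


lemma lek_ev:
  assumes km: "k < 2^m" and lenL: "length L = g + b"
    and cg: "length (filter (ceval (enc n E k)) L) = g" and bN: "b \<le> n*n"
  shows "ceval (enc n E k) (lek L n m) \<longleftrightarrow> b \<le> k"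
proof -
  define f where "f = (\<lambda>j. if odd (k div 2^j) then 2^j else (0::nat))"
  define klow where "klow = (\<Sum>j\<in>{j. j < m \<and> 2^j \<le> n*n}. f j)"
  have kf: "k = (\<Sum>j<m. f j)" unfolding f_def by (rule bits_sum[OF km])
  have ev: "ceval (enc n E k) (lek L n m) \<longleftrightarrow>
      (\<exists>j<m. n*n < 2^j \<and> odd (k div 2^j)) \<or> g + b \<le> g + klow"
    unfolding lek_def klow_def f_def using ev_khigh[of n E k m] cnt_k[of n E k m] lenL cg by simp
  have kl: "klow \<le> k" unfolding kf klow_def by (rule sum_mono2) auto
  show ?thesis
  proof (cases "\<exists>j<m. n*n < 2^j \<and> odd (k div 2^j)")
    case True
    then obtain j where j: "n*n < 2^j" "odd (k div 2^j)" by auto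
    then have "k div 2^j \<noteq> 0" by (metis odd_pos less_numeral_extra(3))
    then have "2^j \<le> k" by (simp add: div_eq_0_iff)
    then show ?thesis using ev True j bN by auto
  next
    case False
    have z: "f i = 0" if "i \<in> {..<m} - {j. j < m \<and> 2^j \<le> n*n}" for i
    proof -
      have "i < m" "n*n < 2^i" using that by auto
      then show ?thesis using False unfolding f_def by auto
    qed
    have "k = klow" unfolding kf klow_def
      by (rule sum.mono_neutral_right) (use z in auto)
    then show ?thesis using ev False by auto
  qed
qed


definition allc :: "circuit list \<Rightarrow> circuit" where
  "allc L = CThr (length L) L"

definition Circ :: "mode \<Rightarrow> fo \<Rightarrow> nat \<Rightarrow> nat \<Rightarrow> nat \<Rightarrow> nat \<Rightarrow> circuit" where
  "Circ md \<psi> x y n m =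
    (if n = 0 then CConst True else if \<not> cc \<psi> then CConst False else if n = 1 then CConst True
     else if fT \<psi> x y \<and> fF \<psi> x y then CConst True
     else if fT \<psi> x y then (if md = Del then allc (elits n) else lek (elits n) n m)
     else if fF \<psi> x y then (if md = Add then allc (nlits n) else lek (nlits n) n m)
     else CConst False)"

lemma Circ_ev:
  assumes q: "qfree \<psi>" and fv: "free_vars \<psi> \<subseteq> {x,y}" and bE: "basic_graph n E" and km: "k < 2^m"
  shows "ceval (enc n E k) (Circ md \<psi> x y n m) \<longleftrightarrow> RM_yes md (FAll x (FAll y \<psi>)) n E k"
proof -
  have a1: "ceval (enc n E k) (allc (elits n)) \<longleftrightarrow> missU n E = 0"
    unfolding allc_def using cnt_e[of n E k] len_cells[of n E] by simp
  have a2: "ceval (enc n E k) (allc (nlits n)) \<longleftrightarrow> edgU n E = 0"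
    unfolding allc_def using cnt_n[of n E k] len_cells[of n E] by simp
  have l1: "ceval (enc n E k) (lek (elits n) n m) \<longleftrightarrow> missU n E \<le> k"
    by (rule lek_ev[OF km _ cnt_e missU_le]) (simp add: len_cells)
  have l2: "ceval (enc n E k) (lek (nlits n) n m) \<longleftrightarrow> edgU n E \<le> k"
    by (rule lek_ev[OF km _ cnt_n edgU_le]) (simp add: len_cells add.commute)
  show ?thesis unfolding RM_char[OF q fv bE] Circ_def
    using a1 a2 l1 l2 by auto
qed

lemma fold_max_le: "fold max xs a \<le> (d::nat) \<longleftrightarrow> a \<le> d \<and> (\<forall>x\<in>set xs. x \<le> d)"
  by (induction xs arbitrary: a) auto

lemma sum_list_bound: "(\<forall>x\<in>set xs. f x \<le> (b::nat)) \<Longrightarrow> sum_list (map f xs) \<le> b * length xs"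
  by (induction xs) auto

lemma cell_idx: "(i,j) \<in> set (cellL n) \<Longrightarrow> i*n+j < n*n"
proof -
  assume "(i,j) \<in> set (cellL n)"
  then have ij: "i < n" "j < n" unfolding cellL_set cellS_def by auto
  have "i*n+j < i*n + n" using ij by simp
  also have "\<dots> = (Suc i)*n" by simp
  also have "\<dots> \<le> n*n" using ij by (intro mult_le_mono1) simp
  finally show ?thesis .
qed

lemma len_cellL: "length (cellL n) \<le> n * n"
  unfolding cellL_def using length_filter_le[of _ "List.product [0..<n] [0..<n]"] by simp

lemma elits_props: "c \<in> set (elits n) \<Longrightarrow> cdepth c \<le> 1 \<and> csize c \<le> 2 \<and> cinputs c \<subseteq> {..<n*n}"
  unfolding elits_def using cell_idx by auto
lemma nlits_props: "c \<in> set (nlits n) \<Longrightarrow> cdepth c \<le> 1 \<and> csize c \<le> 2 \<and> cinputs c \<subseteq> {..<n*n}"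
  unfolding nlits_def using cell_idx by auto
lemma klits_props: "c \<in> set (klits n m) \<Longrightarrow> cdepth c \<le> 1 \<and> csize c \<le> 2 \<and> cinputs c \<subseteq> {..<n*n+m}"
  unfolding klits_def by auto
lemma len_klits: "length (klits n m) \<le> n * n * m"
proof -
  have "length (klits n m) = sum_list (map (\<lambda>j. 2^j) (filter (\<lambda>j. 2^j \<le> n*n) [0..<m]))"
    unfolding klits_def by (simp add: length_concat comp_def)
  also have "\<dots> \<le> n * n * length (filter (\<lambda>j. 2^j \<le> n*n) [0..<m])"
    by (rule sum_list_bound) auto
  also have "\<dots> \<le> n * n * m"
    using length_filter_le[of _ "[0..<m]"] by (intro mult_le_mono2) simp
  finally show ?thesis .
qed

lemma lits_bound:
  assumes "\<And>c. c \<in> set L \<Longrightarrow> cdepth c \<le> 1 \<and> csize c \<le> 2 \<and> cinputs c \<subseteq> {..<n*n+m}"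
    and "length L \<le> n * n"
  shows "cdepth (allc L) \<le> 3 \<and> csize (allc L) \<le> 5 * (n*n+m+1)^2 \<and> cinputs (allc L) \<subseteq> {..<n*n+m}"
    "cdepth (lek L n m) \<le> 3 \<and> csize (lek L n m) \<le> 5 * (n*n+m+1)^2 \<and> cinputs (lek L n m) \<subseteq> {..<n*n+m}"
proof -
  let ?N = "n*n" and ?T = "n*n+m+1"
  have T1: "?T \<le> ?T^2" by (simp add: power2_eq_square)
  have sL: "sum_list (map csize L) \<le> 2 * length L"
    by (rule sum_list_bound) (use assms(1) in auto)
  have sK: "sum_list (map csize (klits n m)) \<le> 2 * length (klits n m)"
    by (rule sum_list_bound) (use klits_props in auto)
  have dL: "\<forall>c\<in>set L. cdepth c \<le> 1" using assms(1) by fastforce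
  have dL2: "\<forall>c\<in>set L. cdepth c \<le> 2" using dL by fastforce
  have dK: "\<forall>c\<in>set (klits n m). cdepth c \<le> 1" using klits_props by fastforce
  have Nm: "?N * m \<le> ?T^2" unfolding power2_eq_square by (intro mult_le_mono) auto
  show "cdepth (allc L) \<le> 3 \<and> csize (allc L) \<le> 5 * ?T^2 \<and> cinputs (allc L) \<subseteq> {..<n*n+m}"
    unfolding allc_def using sL assms T1 dL2 by (auto simp: fold_max_le)
  have sh: "csize (khigh n m) \<le> Suc m"
    unfolding khigh_def using length_filter_le[of _ "[0..<m]"]
    by (simp add: comp_def sum_list_triv)
  have "fold max (map (cdepth \<circ> (\<lambda>j. CIn (n * n + j))) (filter (\<lambda>j. n * n < 2 ^ j) [0..<m])) 0 \<le> 0"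
    by (subst fold_max_le) auto
  then have dh: "cdepth (khigh n m) \<le> 1" unfolding khigh_def by simp
  have ih: "cinputs (khigh n m) \<subseteq> {..<n*n+m}" unfolding khigh_def by auto
  have "csize (lek L n m) = Suc (csize (khigh n m) + Suc (sum_list (map csize L) + sum_list (map csize (klits n m))))"
    unfolding lek_def by simp
  also have "\<dots> \<le> 3 + m + 2 * ?N + 2 * (?N * m)"
    using sh sL sK assms(2) len_klits[of n m] by linarith
  also have "\<dots> \<le> 5 * ?T^2" using Nm T1 by linarith
  finally have "csize (lek L n m) \<le> 5 * ?T^2" .
  moreover have "cdepth (lek L n m) \<le> 3"
    unfolding lek_def using dh dL dK by (auto simp: fold_max_le)
  moreover have "cinputs (lek L n m) \<subseteq> {..<n*n+m}"
    unfolding lek_def using ih assms(1) klits_props by fastforce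
  ultimately show "cdepth (lek L n m) \<le> 3 \<and> csize (lek L n m) \<le> 5 * ?T^2 \<and> cinputs (lek L n m) \<subseteq> {..<n*n+m}"
    by blast
qed

definition okc :: "nat \<Rightarrow> nat \<Rightarrow> circuit \<Rightarrow> bool" where
  "okc n m c \<longleftrightarrow> cdepth c \<le> 3 \<and> csize c \<le> 5 * (n*n+m+1)^2 \<and> cinputs c \<subseteq> {..<n*n+m}"

lemma okc_if: "okc n m X \<Longrightarrow> okc n m Y \<Longrightarrow> okc n m (if b then X else Y)"
  by simp

lemma okc_const: "okc n m (CConst b)"
  unfolding okc_def by simp

lemma Circ_bound: "okc n m (Circ md \<psi> x y n m)"
proof -
  have e: "\<And>c. c \<in> set (elits n) \<Longrightarrow> cdepth c \<le> 1 \<and> csize c \<le> 2 \<and> cinputs c \<subseteq> {..<n*n+m}"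
    using elits_props by fastforce
  have nn: "\<And>c. c \<in> set (nlits n) \<Longrightarrow> cdepth c \<le> 1 \<and> csize c \<le> 2 \<and> cinputs c \<subseteq> {..<n*n+m}"
    using nlits_props by fastforce
  have le: "length (elits n) \<le> n*n" "length (nlits n) \<le> n*n"
    unfolding elits_def nlits_def using len_cellL by auto
  have o1: "okc n m (allc (elits n))" "okc n m (lek (elits n) n m)"
    unfolding okc_def using lits_bound[OF e le(1)] by blast+
  have o2: "okc n m (allc (nlits n))" "okc n m (lek (nlits n) n m)"
    unfolding okc_def using lits_bound[OF nn le(2)] by blast+
  show ?thesis unfolding Circ_def
    by (intro okc_if okc_const o1 o2)
qed

theorem lemma4p10:
  fixes md :: mode and x y :: nat and \<psi> :: fo
  assumes "qfree \<psi>" and "free_vars \<psi> \<subseteq> {x, y}"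
  shows "in_TC0 (RM_yes md (FAll x (FAll y \<psi>)))"
proof -
  have "\<forall>n m. cdepth (Circ md \<psi> x y n m) \<le> 3
            \<and> csize (Circ md \<psi> x y n m) \<le> 5 * (n * n + m + 1) ^ 2
            \<and> cinputs (Circ md \<psi> x y n m) \<subseteq> {..< n * n + m}
            \<and> (\<forall>E k. basic_graph n E \<and> k < 2 ^ m \<longrightarrow>
                   (ceval (enc n E k) (Circ md \<psi> x y n m) \<longleftrightarrow> RM_yes md (FAll x (FAll y \<psi>)) n E k))"
    using Circ_bound Circ_ev[OF assms] unfolding okc_def by blast
  then show ?thesis unfolding in_TC0_def by blast
qed

end
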